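(* Let $(\Omega,\mathcal{F})$ be a measurable space, $\mathcal{P}$ a family of probability measures on it, and $\mathbb{E}[\cdot]:=\sup_{P\in\mathcal{P}}E_P[\cdot]$ the associated upper (sublinear) expectation. Let $\{\epsilon_i\}_{i\ge1}$ and $\{\eta_i\}_{i\ge1}$ be real random variables such that, under each $P\in\mathcal{P}$, $\{\epsilon_i\}$ is i.i.d., $\{\eta_i\}$ is i.i.d., and $\{\eta_i\}$ is independent of $\{\epsilon_i\}$. Assume that for some $\alpha\in(0,1]$: $\mathbb{E}[\epsilon_1^2]=\overline{\sigma}^2$, $-\mathbb{E}[-\epsilon_1^2]=\underline{\sigma}^2>0$, $\mathbb{E}[|\epsilon_1|^{2+2\alpha}]<\infty$; $\mathbb{E}[\eta_1]=\mathbb{E}[-\eta_1]=0$, $\mathbb{E}[\eta_1^2]=\overline{\nu}^2$, $-\mathbb{E}[-\eta_1^2]=\underline{\nu}^2>0$, $\mathbb{E}[|\eta_1|^{2+2\alpha}]<\infty$. Let $0<\underline{\zeta}<\overline{\zeta}<\infty$ be constants. Let $\mathcal{F}_0:=\{\emptyset,\Omega\}$, $\mathcal{F}_i:=\sigma(\epsilon_1,\dots,\epsilon_i,\eta_1,\dots,\eta_i)$, and for $n\in\mathbb{N}$ let $\Sigma[\underline{\zeta},\overline{\zeta}]$ be the collection of all sequences $X=\{X_i\}_{i=1}^n$ with $X_i$ $\mathcal{F}_{i-1}$-measurable and taking values in $[\underline{\zeta},\overline{\zeta}]$. Given $p>0$, define \[ C_{\alpha}:=\big(32\overline{\zeta}^{2+2\alpha}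 \mathbb{E}[|\epsilon_1|^{2+2\alpha}]+32 \mathbb{E}[|\eta_1|^{2+2\alpha}]\big)^{\frac{1}{1+\alpha}},\qquad \gamma_n:=\underline{\sigma}^2\underline{\zeta}^2+\underline{\nu}^2-\frac{C_{\alpha}}{p\, n^{\frac{\alpha}{1+\alpha}}}. \] Then for every $n\in\mathbb{N}$, the test which rejects the null hypothesis $\mathcal{H}_0$ when $\sum_{i=1}^nY_i^2\le n\gamma_n$ has upper probability of missed detections at most $p$, i.e. \[ \sup_{P\in\mathcal{P}}\ \sup_{X\in\Sigma[\underline{\zeta},\overline{\zeta}]}\ P\Big(\sum_{i=1}^{n}(\epsilon_iX_i+\eta_i)^2\leq n\gamma_n\Big)\leq p. \]
   Context: Detection setting: the observations are $Y_1,\dots,Y_n$, and the binary hypothesis test is $\mathcal{H}_0: Y_i=\epsilon_iX_i+\eta_i$ ($i=1,\dots,n$) versus $\mathcal{H}_1: Y_i=\eta_i$ ($i=1,\dots,n$), where $\epsilon_i$ is channel fading, $\eta_i$ noise and $X=\{X_i\}$ the (feedback-dependent, predictable) input. A missed detection is choosing $\mathcal{H}_1$ when $\mathcal{H}_0$ holds; its upper probability is the supremum over $P\in\mathcal{P}$ and $X\in\Sigma[\underline\zeta,\overline\zeta]$ of the probability under $\mathcal{H}_0$ of choosing $\mathcal{H}_1$. *)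

theory Defs
  imports "HOL-Probability.Probability"
begin

definition upexp :: "'a measure set \<Rightarrow> ('a \<Rightarrow> real) \<Rightarrow> ereal" where
  "upexp Ps f = (SUP P\<in>Ps. ereal (integral\<^sup>L P f))"

text \<open>Upper expectation of a nonnegative quantity, via the nonnegative Lebesgue integral
  (used for moment-finiteness conditions, so that finiteness is genuine).\<close>
definition upexp_nn :: "'a measure set \<Rightarrow> ('a \<Rightarrow> real) \<Rightarrow> ennreal" where
  "upexp_nn Ps f = (SUP P\<in>Ps. (\<integral>\<^sup>+ x. ennreal (f x) \<partial>P))"

definition filt :: "'a measure \<Rightarrow> (nat \<Rightarrow> 'a \<Rightarrow> real) \<Rightarrow> (nat \<Rightarrow> 'a \<Rightarrow> real) \<Rightarrow> nat \<Rightarrow> 'a measure" where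
  "filt M eps eta i = sigma (space M)
     (\<Union>j\<in>{1..i}. {eps j -` B \<inter> space M | B. B \<in> sets borel}
                  \<union> {eta j -` B \<inter> space M | B. B \<in> sets borel})"

definition Sigma_adm :: "'a measure \<Rightarrow> (nat \<Rightarrow> 'a \<Rightarrow> real) \<Rightarrow> (nat \<Rightarrow> 'a \<Rightarrow> real) \<Rightarrow> nat
    \<Rightarrow> real \<Rightarrow> real \<Rightarrow> (nat \<Rightarrow> 'a \<Rightarrow> real) set" where
  "Sigma_adm M eps eta n zl zu = {X. \<forall>i\<in>{1..n}.
      X i \<in> borel_measurable (filt M eps eta (i - 1)) \<and>
      (\<forall>\<omega>\<in>space M. zl \<le> X i \<omega> \<and> X i \<omega> \<le> zu)}"

end

theory Submission
  imports Defs
begin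


lemma powr_sum_le:
  fixes a b q :: real
  assumes "a \<ge> 0" "b \<ge> 0" "q \<ge> 1"
  shows "(a + b) powr q \<le> 2 powr (q - 1) * (a powr q + b powr q)"
proof (cases "a = 0 \<or> b = 0")
  case True
  have "1 \<le> 2 powr (q - 1)" using assms by (simp add: ge_one_powr_ge_zero)
  moreover have "a powr q + b powr q \<ge> 0" by simp
  ultimately have "a powr q + b powr q \<le> 2 powr (q - 1) * (a powr q + b powr q)"
    by (metis mult_le_cancel_right1 order_less_le_trans not_le)
  then show ?thesis using True by auto
next
  case False
  then have ab: "a > 0" "b > 0" using assms by auto
  have "((1 - 1/2) *\<^sub>R a + (1/2) *\<^sub>R b) powr q \<le> (1 - 1/2) * a powr q + (1/2) * b powr q"
    by (rule convex_onD[OF powr_convex[OF assms(3)]]) (use ab in auto)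
  then have h: "((a + b) / 2) powr q \<le> (a powr q + b powr q) / 2"
    by (simp add: field_simps)
  have "(a + b) powr q = 2 powr q * ((a + b) / 2) powr q"
    using ab by (simp add: powr_divide)
  also have "\<dots> \<le> 2 powr q * ((a powr q + b powr q) / 2)"
    by (intro mult_left_mono h) auto
  also have "\<dots> = 2 powr (q - 1) * (a powr q + b powr q)"
    by (simp add: powr_diff)
  finally show ?thesis .
qed

lemma powr_lin_le:
  fixes e f x q :: real
  assumes "x \<ge> 0" "q \<ge> 1"
  shows "\<bar>e * x + f\<bar> powr q \<le> 2 powr (q - 1) * (x powr q * \<bar>e\<bar> powr q + \<bar>f\<bar> powr q)"
proof -
  have "\<bar>e * x + f\<bar> powr q \<le> (\<bar>e\<bar> * x + \<bar>f\<bar>) powr q"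
    using assms by (intro powr_mono2) (auto simp: abs_mult intro: order.trans[OF abs_triangle_ineq])
  also have "\<dots> \<le> 2 powr (q - 1) * ((\<bar>e\<bar> * x) powr q + \<bar>f\<bar> powr q)"
    using assms by (intro powr_sum_le) auto
  also have "(\<bar>e\<bar> * x) powr q = x powr q * \<bar>e\<bar> powr q"
    using assms by (simp add: powr_mult)
  finally show ?thesis .
qed

lemma sq_powr: "((w::real)\<^sup>2) powr (1 + a) = \<bar>w\<bar> powr (2 + 2 * a)"
proof -
  have "(w\<^sup>2) = \<bar>w\<bar> powr 2" by (cases "w = 0") (auto simp: powr_numeral)
  then have "(w\<^sup>2) powr (1 + a) = \<bar>w\<bar> powr (2 * (1 + a))" by (simp only: powr_powr)
  then show ?thesis by (simp add: algebra_simps)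
qed

lemma trunc_lower:
  fixes z c a :: real
  assumes "z \<ge> 0" "c > 0" "a > 0"
  shows "min z c \<ge> z - z powr (1 + a) / c powr a"
proof (cases "z \<le> c")
  case True then show ?thesis using assms by simp
next
  case False
  then have "z > 0" using assms by auto
  have "1 \<le> (z / c) powr a" using False assms by (intro ge_one_powr_ge_zero) auto
  then have "z \<le> z * (z / c) powr a" using \<open>z > 0\<close> by simp
  also have "z * (z / c) powr a = z powr (1 + a) / c powr a"
    using \<open>z > 0\<close> assms by (simp add: powr_divide powr_add)
  finally show ?thesis using False assms by simp
qed

lemma trunc_sq:
  fixes z c a :: real
  assumes "z \<ge> 0" "c > 0" "a > 0" "a \<le> 1"
  shows "(min z c)\<^sup>2 \<le> c powr (1 - a) * z powr (1 + a)"
proof (cases "z = 0")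
  case True then show ?thesis using assms by simp
next
  case False
  define m where "m = min z c"
  have m: "m > 0" "m \<le> c" "m \<le> z" using False assms by (auto simp: m_def)
  have "m\<^sup>2 = m powr (1 - a) * m powr (1 + a)"
    using m by (simp add: powr_add[symmetric] powr_numeral)
  also have "\<dots> \<le> c powr (1 - a) * z powr (1 + a)"
    using m assms by (intro mult_mono powr_mono2) auto
  finally show ?thesis by (simp add: m_def)
qed



lemma final_arith:
  fixes n :: nat and a p L K C c :: real
  assumes a: "0 < a" "a \<le> 1" and p: "0 < p" "p < 1" and n: "n \<ge> 1" and L: "L > 0"
    and C: "C = (32 * L) powr (1 / (1 + a))" and K: "K = 2 powr (1 + 2 * a) * L"
    and c: "c = real n powr (1 / (1 + a)) * C / p"
  shows "c > 0" "c - n * (K / c powr a) > 0" "n * (c powr (1 - a) * K) / (c - n * (K / c powr a))\<^sup>2 \<le> p"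
    "real n * C / (p * real n powr (a / (1 + a))) = c"
proof -
  have n0: "real n > 0" using n by simp
  have C0: "C > 0" using C L by simp
  show c0: "c > 0" using c C0 n0 p by simp
  have e1: "1 / (1 + a) * (1 + a) = 1" using a by simp
  have npow: "(real n powr (1 / (1 + a))) powr (1 + a) = real n"
    using n0 a by (simp add: powr_powr e1)
  have Cpow: "C powr (1 + a) = 32 * L"
    using L a by (simp add: C powr_powr e1)
  have cpow: "c powr (1 + a) = real n * (32 * L) / p powr (1 + a)"
    unfolding c using n0 C0 p by (simp add: powr_mult powr_divide npow Cpow)
  define t where "t = real n * K / c powr (1 + a)"
  have t_eq: "t = 2 powr (1 + 2 * a) * p powr (1 + a) / 32"
    unfolding t_def cpow K using n0 L p by (simp add: field_simps)
  have "2 powr (1 + 2 * a) \<le> 2 powr 3" using a by (intro powr_mono) auto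
  then have two: "2 powr (1 + 2 * a) \<le> 8" by simp
  have "p powr (1 + a) \<le> p powr 1" using p a by (intro powr_mono') auto
  then have pp: "p powr (1 + a) \<le> p" using p by simp
  have t0: "t \<ge> 0" unfolding t_eq by simp
  have t1: "t \<le> p / 4"
  proof -
    have "2 powr (1 + 2 * a) * p powr (1 + a) \<le> 8 * p"
      using two pp by (intro mult_mono) auto
    then show ?thesis unfolding t_eq by (simp add: mult.commute)
  qed
  have cadd: "c powr (1 + a) = c * c powr a" using c0 by (simp add: powr_add)
  have tc: "real n * (K / c powr a) = t * c"
    unfolding t_def cadd using c0 by (simp add: field_simps)
  have tau: "c - real n * (K / c powr a) = c * (1 - t)" unfolding tc by (simp add: algebra_simps)
  show "c - n * (K / c powr a) > 0" unfolding tau using c0 t1 p by simp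
  have c2: "c powr (1 - a) * c powr (1 + a) = c\<^sup>2"
    using c0 by (simp add: powr_add[symmetric] powr_numeral)
  have num: "real n * (c powr (1 - a) * K) = t * c\<^sup>2"
    unfolding t_def using c0 by (simp add: c2[symmetric] field_simps)
  have "real n * (c powr (1 - a) * K) / (c - real n * (K / c powr a))\<^sup>2 = t / (1 - t)\<^sup>2"
    unfolding num tau using c0 by (simp add: power_mult_distrib)
  also have "\<dots> \<le> (p / 4) / (3 / 4)\<^sup>2"
  proof (rule frac_le)
    show "(3 / 4)\<^sup>2 \<le> (1 - t)\<^sup>2" using t1 p t0 by (intro power_mono) auto
  qed (use t0 t1 in auto)
  also have "\<dots> \<le> p" using p by (simp add: power2_eq_square)
  finally show "n * (c powr (1 - a) * K) / (c - n * (K / c powr a))\<^sup>2 \<le> p" .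
  have "real n = real n powr (1 / (1 + a)) * real n powr (a / (1 + a))"
    using n0 a by (simp add: powr_add[symmetric] add_divide_distrib[symmetric])
  then show "real n * C / (p * real n powr (a / (1 + a))) = c"
    unfolding c using n0 p by (simp add: field_simps)
qed



lemma meas_sub:
  assumes "f \<in> measurable N K" "space N = space N'" "sets N \<subseteq> sets N'"
  shows "f \<in> measurable N' K"
  using assms by (auto simp: measurable_def)

lemma measurable_sigma_gen:
  assumes "{f -` A \<inter> \<Omega> | A. A \<in> sets borel} \<subseteq> G" "G \<subseteq> Pow \<Omega>"
  shows "f \<in> measurable (sigma \<Omega> G) (borel :: 'b::topological_space measure)"
proof (rule measurableI)
  fix x assume "x \<in> space (sigma \<Omega> G)" then show "f x \<in> space borel" by simp
next
  fix A :: "'b set" assume "A \<in> sets borel"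
  then have "f -` A \<inter> \<Omega> \<in> G" using assms(1) by auto
  then show "f -` A \<inter> space (sigma \<Omega> G) \<in> sets (sigma \<Omega> G)"
    using assms(2) by (simp add: sets_measure_of space_measure_of_conv)
qed

lemma (in prob_space) indep_integral_split:
  fixes Y V :: "'a \<Rightarrow> real \<times> real" and g :: "real \<times> real \<Rightarrow> real \<times> real \<Rightarrow> real"
  assumes ind: "indep_var borel Y borel V"
    and g[measurable]: "case_prod g \<in> borel_measurable (borel \<Otimes>\<^sub>M borel)"
    and bnd: "\<And>y v. \<bar>g y v\<bar> \<le> B"
  shows "(\<integral>\<omega>. g (Y \<omega>) (V \<omega>) \<partial>M) = (\<integral>\<omega>. (\<integral>\<omega>'. g (Y \<omega>) (V \<omega>') \<partial>M) \<partial>M)"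
proof -
  have Y[measurable]: "Y \<in> borel_measurable M" and V[measurable]: "V \<in> borel_measurable M"
    and d: "distr M borel Y \<Otimes>\<^sub>M distr M borel V = distr M (borel \<Otimes>\<^sub>M borel) (\<lambda>x. (Y x, V x))"
    using ind unfolding indep_var_distribution_eq by auto
  interpret DY: prob_space "distr M borel Y" by (rule prob_space_distr) simp
  interpret DV: prob_space "distr M borel V" by (rule prob_space_distr) simp
  interpret PP: pair_prob_space "distr M borel Y" "distr M borel V"
    by (simp add: pair_prob_space_def pair_sigma_finite_def DY.prob_space_axioms DV.prob_space_axioms
        DY.sigma_finite_measure_axioms DV.sigma_finite_measure_axioms)
  have gP: "(\<lambda>z. g (fst z) (snd z)) \<in> borel_measurable (borel \<Otimes>\<^sub>M borel)"
    using g by (simp add: case_prod_beta')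
  have "(\<integral>\<omega>. g (Y \<omega>) (V \<omega>) \<partial>M) = integral\<^sup>L (distr M (borel \<Otimes>\<^sub>M borel) (\<lambda>x. (Y x, V x))) (case_prod g)"
    by (subst integral_distr) auto
  also have "\<dots> = integral\<^sup>L (distr M borel Y \<Otimes>\<^sub>M distr M borel V) (case_prod g)"
    by (simp add: d)
  also have "\<dots> = (\<integral>y. (\<integral>v. g y v \<partial>distr M borel V) \<partial>distr M borel Y)"
  proof -
    have "integrable (distr M borel Y \<Otimes>\<^sub>M distr M borel V) (case_prod g)"
      using bnd by (intro PP.P.integrable_const_bound[where B=B]) (auto simp: case_prod_beta')
    from PP.integral_fst'[OF this] show ?thesis by simp
  qed
  also have "\<dots> = (\<integral>y. (\<integral>\<omega>'. g y (V \<omega>') \<partial>M) \<partial>distr M borel Y)"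
    by (intro Bochner_Integration.integral_cong refl) (auto simp: integral_distr)
  also have "\<dots> = (\<integral>\<omega>. (\<integral>\<omega>'. g (Y \<omega>) (V \<omega>') \<partial>M) \<partial>M)"
    by (subst integral_distr) auto
  finally show ?thesis .
qed

locale chan = prob_space P for P :: "'a measure" +
  fixes eps eta :: "nat \<Rightarrow> 'a \<Rightarrow> real"
  assumes me: "\<And>i. i \<ge> 1 \<Longrightarrow> eps i \<in> borel_measurable P"
    and mt: "\<And>i. i \<ge> 1 \<Longrightarrow> eta i \<in> borel_measurable P"
    and ie: "indep_vars (\<lambda>_. borel) eps {1..}"
    and it: "indep_vars (\<lambda>_. borel) eta {1..}"
    and iet: "indep_var (PiM {1..} (\<lambda>_. borel)) (\<lambda>\<omega>. \<lambda>i\<in>{1..}. eps i \<omega>)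
                   (PiM {1..} (\<lambda>_. borel)) (\<lambda>\<omega>. \<lambda>i\<in>{1..}. eta i \<omega>)"
begin

lemma indep_Z:
  "indep_vars (\<lambda>_. borel) (case_sum eps eta) (Inl ` {1..} \<union> Inr ` {1..})"
proof -
  let ?Z = "case_sum eps eta"
  let ?I = "Inl ` {1..} \<union> Inr ` {1..} :: (nat + nat) set"
  let ?F = "\<lambda>k. {?Z k -` A \<inter> space P | A. A \<in> sets borel}"
  have rv: "\<forall>k\<in>?I. random_variable borel (?Z k)" using me mt by auto
  have ev: "\<forall>k\<in>?I. ?F k \<subseteq> events"
    using rv by (auto intro: measurable_sets)
  have main: "prob (\<Inter>j\<in>J. A j) = (\<Prod>j\<in>J. prob (A j))"
    if J: "J \<subseteq> ?I" "J \<noteq> {}" "finite J" and A: "A \<in> Pi J ?F" for J A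
  proof -
    from A have "\<forall>j\<in>J. \<exists>B. B \<in> sets borel \<and> A j = ?Z j -` B \<inter> space P"
      by (auto simp: Pi_iff)
    then obtain B where B: "\<And>j. j \<in> J \<Longrightarrow> B j \<in> sets borel \<and> A j = ?Z j -` B j \<inter> space P"
      by metis
    define J1 where "J1 = {k. Inl k \<in> J}"
    define J2 where "J2 = {k. Inr k \<in> J}"
    have "J1 = Inl -` J" "J2 = Inr -` J" by (auto simp: J1_def J2_def)
    then have fin: "finite J1" "finite J2"
      using J(3) by (auto intro!: finite_vimageI simp: inj_on_def)
    have J12: "J1 \<subseteq> {1..}" "J2 \<subseteq> {1..}" using J(1) by (auto simp: J1_def J2_def)
    have Jeq: "J = Inl ` J1 \<union> Inr ` J2"
    proof (rule set_eqI)
      fix x show "x \<in> J \<longleftrightarrow> x \<in> Inl ` J1 \<union> Inr ` J2" by (cases x) (auto simp: J1_def J2_def)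
    qed
    have hA1: "\<And>k. k \<in> J1 \<Longrightarrow> A (Inl k) = eps k -` B (Inl k) \<inter> space P \<and> B (Inl k) \<in> sets borel \<and> 1 \<le> k"
      using B J12 by (auto simp: J1_def)
    have hA2: "\<And>k. k \<in> J2 \<Longrightarrow> A (Inr k) = eta k -` B (Inr k) \<inter> space P \<and> B (Inr k) \<in> sets borel \<and> 1 \<le> k"
      using B J12 by (auto simp: J2_def)
    define E1 where "E1 = space P \<inter> (\<Inter>k\<in>J1. A (Inl k))"
    define E2 where "E2 = space P \<inter> (\<Inter>k\<in>J2. A (Inr k))"
    have c1: "(\<Inter>j\<in>J. A j) = E1 \<inter> E2"
    proof -
      obtain j0 where "j0 \<in> J" using J(2) by auto
      then have "(\<Inter>j\<in>J. A j) \<subseteq> space P" using B by auto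
      moreover have "(\<Inter>j\<in>J. A j) = (\<Inter>k\<in>J1. A (Inl k)) \<inter> (\<Inter>k\<in>J2. A (Inr k))"
        by (subst Jeq) (simp add: image_Un image_image Inter_Un_distrib)
      ultimately show ?thesis unfolding E1_def E2_def by auto
    qed
    have c2: "prob E1 = (\<Prod>k\<in>J1. prob (A (Inl k)))"
    proof (cases "J1 = {}")
      case True then show ?thesis by (simp add: E1_def prob_space)
    next
      case False
      have "E1 = (\<Inter>k\<in>J1. eps k -` B (Inl k) \<inter> space P)"
        using B False by (auto simp: E1_def J1_def)
      also have "prob \<dots> = (\<Prod>k\<in>J1. prob (eps k -` B (Inl k) \<inter> space P))"
        using ie False fin J12 B unfolding indep_vars_def2
        by (intro indep_setsD[of "\<lambda>i. {eps i -` A \<inter> space P |A. A \<in> sets borel}" "{1..}"])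
           (auto simp: J1_def)
      also have "\<dots> = (\<Prod>k\<in>J1. prob (A (Inl k)))"
        using B by (intro prod.cong) (auto simp: J1_def)
      finally show ?thesis .
    qed
    have c2': "prob E2 = (\<Prod>k\<in>J2. prob (A (Inr k)))"
    proof (cases "J2 = {}")
      case True then show ?thesis by (simp add: E2_def prob_space)
    next
      case False
      have "E2 = (\<Inter>k\<in>J2. eta k -` B (Inr k) \<inter> space P)"
        using B False by (auto simp: E2_def J2_def)
      also have "prob \<dots> = (\<Prod>k\<in>J2. prob (eta k -` B (Inr k) \<inter> space P))"
        using it False fin J12 B unfolding indep_vars_def2
        by (intro indep_setsD[of "\<lambda>i. {eta i -` A \<inter> space P |A. A \<in> sets borel}" "{1..}"])
           (auto simp: J2_def)
      also have "\<dots> = (\<Prod>k\<in>J2. prob (A (Inr k)))"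
        using B by (intro prod.cong) (auto simp: J2_def)
      finally show ?thesis .
    qed
    define Xa where "Xa = {f \<in> space (PiM {1..} (\<lambda>_. borel :: real measure)). \<forall>k\<in>J1. f k \<in> B (Inl k)}"
    define Xb where "Xb = {f \<in> space (PiM {1..} (\<lambda>_. borel :: real measure)). \<forall>k\<in>J2. f k \<in> B (Inr k)}"
    have Xa: "Xa \<in> sets (PiM {1..} (\<lambda>_. borel))"
      unfolding Xa_def
    proof (rule sets.sets_Collect_finite_All[OF _ fin(1)])
      fix k assume "k \<in> J1"
      then have "(\<lambda>f. f k) -` B (Inl k) \<inter> space (PiM {1..} (\<lambda>_. borel :: real measure)) \<in> sets (PiM {1..} (\<lambda>_. borel))"
        using hA1 by (intro measurable_sets[OF measurable_component_singleton]) auto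
      then show "{f \<in> space (PiM {1..} (\<lambda>_. borel :: real measure)). f k \<in> B (Inl k)} \<in> sets (PiM {1..} (\<lambda>_. borel))"
        by (simp add: Int_def conj_commute)
    qed
    have Xb: "Xb \<in> sets (PiM {1..} (\<lambda>_. borel))"
      unfolding Xb_def
    proof (rule sets.sets_Collect_finite_All[OF _ fin(2)])
      fix k assume "k \<in> J2"
      then have "(\<lambda>f. f k) -` B (Inr k) \<inter> space (PiM {1..} (\<lambda>_. borel :: real measure)) \<in> sets (PiM {1..} (\<lambda>_. borel))"
        using hA2 by (intro measurable_sets[OF measurable_component_singleton]) auto
      then show "{f \<in> space (PiM {1..} (\<lambda>_. borel :: real measure)). f k \<in> B (Inr k)} \<in> sets (PiM {1..} (\<lambda>_. borel))"
        by (simp add: Int_def conj_commute)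
    qed
    have "(\<lambda>x. ((\<lambda>i\<in>{1..}. eps i x), (\<lambda>i\<in>{1..}. eta i x))) -` (Xa \<times> Xb) \<inter> space P = E1 \<inter> E2"
      using hA1 hA2 by (auto simp: Xa_def Xb_def E1_def E2_def space_PiM)
    moreover have "(\<lambda>x. \<lambda>i\<in>{1..}. eps i x) -` Xa \<inter> space P = E1"
      using hA1 by (auto simp: Xa_def E1_def space_PiM)
    moreover have "(\<lambda>x. \<lambda>i\<in>{1..}. eta i x) -` Xb \<inter> space P = E2"
      using hA2 by (auto simp: Xb_def E2_def space_PiM)
    ultimately have c3: "prob (E1 \<inter> E2) = prob E1 * prob E2"
      using indep_varD[OF iet Xa Xb] by simp
    have c4: "(\<Prod>j\<in>J. prob (A j)) = (\<Prod>k\<in>J1. prob (A (Inl k))) * (\<Prod>k\<in>J2. prob (A (Inr k)))"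
      unfolding Jeq using fin
      by (subst prod.union_disjoint) (auto simp: prod.reindex)
    show ?thesis using c1 c2 c2' c3 c4 by simp
  qed
  show ?thesis unfolding indep_vars_def2 indep_sets_def
    using rv ev main by blast
qed

definition "gens k = (\<Union>j\<in>{1..k}. {eps j -` B \<inter> space P | B. B \<in> sets borel}
                  \<union> {eta j -` B \<inter> space P | B. B \<in> sets borel})"

lemma gens_Pow: "gens k \<subseteq> Pow (space P)" by (auto simp: gens_def)

lemma filt_space[simp]: "space (filt P eps eta k) = space P"
  by (simp add: filt_def space_measure_of_conv)

lemma filt_sets: "sets (filt P eps eta k) = sigma_sets (space P) (gens k)"
  unfolding filt_def gens_def[symmetric] using gens_Pow by (simp add: sets_measure_of)

lemma gens_sub: "gens k \<subseteq> sets P"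
  using me mt by (auto simp: gens_def intro!: measurable_sets)

lemma filt_sub: "sets (filt P eps eta k) \<subseteq> sets P"
  unfolding filt_sets using gens_sub by (intro sets.sigma_sets_subset)

lemma filt_mono: "k \<le> k' \<Longrightarrow> sets (filt P eps eta k) \<subseteq> sets (filt P eps eta k')"
  unfolding filt_sets gens_def by (intro sigma_sets_mono' UN_mono) auto

lemma filt_meas_P: assumes "f \<in> measurable (filt P eps eta k) N" shows "f \<in> measurable P N"
  by (rule meas_sub[OF assms]) (use filt_sub in auto)

lemma filt_meas_mono: assumes "f \<in> measurable (filt P eps eta k) N" "k \<le> k'" shows "f \<in> measurable (filt P eps eta k') N"
  by (rule meas_sub[OF assms(1)]) (use filt_mono[OF assms(2)] in auto)

lemma eps_filt: assumes "1 \<le> i" "i \<le> k" shows "eps i \<in> borel_measurable (filt P eps eta k)"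
  unfolding filt_def gens_def[symmetric]
proof (rule measurable_sigma_gen[OF _ gens_Pow])
  show "{eps i -` A \<inter> space P |A. A \<in> sets borel} \<subseteq> gens k"
    unfolding gens_def using assms by (intro subsetI UN_I[of i]) auto
qed

lemma eta_filt: assumes "1 \<le> i" "i \<le> k" shows "eta i \<in> borel_measurable (filt P eps eta k)"
  unfolding filt_def gens_def[symmetric]
proof (rule measurable_sigma_gen[OF _ gens_Pow])
  show "{eta i -` A \<inter> space P |A. A \<in> sets borel} \<subseteq> gens k"
    unfolding gens_def using assms by (intro subsetI UN_I[of i]) auto
qed

lemma indep_filt:
  fixes Y :: "'a \<Rightarrow> real \<times> real"
  assumes j: "j \<ge> 1" and Y: "Y \<in> borel_measurable (filt P eps eta (j - 1))"
  shows "indep_var borel Y borel (\<lambda>\<omega>. (eps j \<omega>, eta j \<omega>))"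
proof -
  let ?Z = "case_sum eps eta"
  define E where "E = (\<lambda>k. {?Z k -` A \<inter> space P | A. A \<in> sets (borel :: real measure)})"
  define I where "I = (\<lambda>b. if b then Inl ` {1..<j} \<union> Inr ` {1..<j} else {Inl j, Inr j})"
  have "indep_sets E (Inl ` {1..} \<union> Inr ` {1..})"
    using indep_Z unfolding indep_vars_def2 E_def by auto
  then have "indep_sets E (\<Union>b. I b)"
    by (rule indep_sets_mono_index[rotated]) (use j in \<open>auto simp: I_def\<close>)
  then have ind: "indep_sets (\<lambda>b. sigma_sets (space P) (\<Union>i\<in>I b. E i)) UNIV"
  proof (rule indep_sets_collect_sigma)
    fix i :: "nat + nat" and b :: bool
    show "Int_stable (E i)"
      unfolding E_def Int_stable_def
      apply auto
      apply (rule_tac x="A \<inter> Aa" in exI)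
      apply auto
      done
  next
    show "disjoint_family_on I UNIV"
      by (auto simp: disjoint_family_on_def I_def)
  qed
  have jj: "{1..j-1} = {1..<j}" using j by auto
  have gT: "gens (j - 1) = (\<Union>i\<in>I True. E i)"
    unfolding gens_def jj I_def E_def by (simp add: image_Un image_image Union_Un_distrib UN_Un_distrib)
  have V: "(\<lambda>\<omega>. (eps j \<omega>, eta j \<omega>)) \<in> measurable (sigma (space P) (\<Union>i\<in>I False. E i)) borel"
  proof -
    have s: "(\<Union>i\<in>I False. E i) \<subseteq> Pow (space P)" by (auto simp: I_def E_def)
    have "eps j \<in> measurable (sigma (space P) (\<Union>i\<in>I False. E i)) borel"
      using s by (intro measurable_sigma_gen) (auto simp: I_def E_def)
    moreover have "eta j \<in> measurable (sigma (space P) (\<Union>i\<in>I False. E i)) borel"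
      using s by (intro measurable_sigma_gen) (auto simp: I_def E_def)
    ultimately show ?thesis
      unfolding borel_prod[symmetric] by (rule measurable_Pair)
  qed
  have VP: "(\<lambda>\<omega>. (eps j \<omega>, eta j \<omega>)) \<in> borel_measurable P"
    using me mt j unfolding borel_prod[symmetric] by (intro measurable_Pair) auto
  have s: "(\<Union>i\<in>I False. E i) \<subseteq> Pow (space P)" by (auto simp: I_def E_def)
  show ?thesis
    unfolding indep_var_def indep_vars_def2
  proof (intro conjI ballI)
    fix b :: bool show "random_variable (case_bool borel borel b) (case_bool Y (\<lambda>\<omega>. (eps j \<omega>, eta j \<omega>)) b)"
      using filt_meas_P[OF Y] VP by (cases b) auto
  next
    show "indep_sets (\<lambda>b. {case_bool Y (\<lambda>\<omega>. (eps j \<omega>, eta j \<omega>)) b -` A \<inter> space P |A.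
            A \<in> sets (case_bool borel borel b)}) UNIV"
    proof (rule indep_sets_mono_sets[OF ind])
      fix b :: bool
      show "{case_bool Y (\<lambda>\<omega>. (eps j \<omega>, eta j \<omega>)) b -` A \<inter> space P |A. A \<in> sets (case_bool borel borel b)}
          \<subseteq> sigma_sets (space P) (\<Union>i\<in>I b. E i)"
      proof (cases b)
        case True
        then show ?thesis
          using measurable_sets[OF Y, unfolded filt_sets gT filt_space] by auto
      next
        case False
        then show ?thesis
          using measurable_sets[OF V] s by (auto simp: sets_measure_of space_measure_of_conv)
      qed
    qed
  qed
qed

lemma main_bound:
  fixes X :: "nat \<Rightarrow> 'a \<Rightarrow> real" and n :: nat and a zl zu c K mu tau :: real
  assumes Xm: "\<And>i. 1 \<le> i \<Longrightarrow> i \<le> n \<Longrightarrow> X i \<in> borel_measurable (filt P eps eta (i - 1))"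
    and Xb: "\<And>i \<omega>. 1 \<le> i \<Longrightarrow> i \<le> n \<Longrightarrow> \<omega> \<in> space P \<Longrightarrow> zl \<le> X i \<omega> \<and> X i \<omega> \<le> zu"
    and h_low: "\<And>i x. 1 \<le> i \<Longrightarrow> zl \<le> x \<Longrightarrow> x \<le> zu \<Longrightarrow>
        mu - K / c powr a \<le> (\<integral>\<omega>. min ((eps i \<omega> * x + eta i \<omega>)\<^sup>2) c \<partial>P)"
    and h_sq: "\<And>i x. 1 \<le> i \<Longrightarrow> zl \<le> x \<Longrightarrow> x \<le> zu \<Longrightarrow>
        (\<integral>\<omega>. (min ((eps i \<omega> * x + eta i \<omega>)\<^sup>2) c)\<^sup>2 \<partial>P) \<le> c powr (1 - a) * K"
    and c: "c > 0" and K: "K \<ge> 0" and tau: "tau = c - n * (K / c powr a)" "tau > 0"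
  shows "prob {\<omega> \<in> space P. (\<Sum>i=1..n. (eps i \<omega> * X i \<omega> + eta i \<omega>)\<^sup>2) \<le> n * mu - c}
          \<le> n * (c powr (1 - a) * K) / tau\<^sup>2"
proof -
  define m where "m = (\<lambda>i x \<omega>. min ((eps i \<omega> * x + eta i \<omega>)\<^sup>2) c)"
  define h where "h = (\<lambda>i x. \<integral>\<omega>. m i x \<omega> \<partial>P)"
  define D where "D = (\<lambda>i \<omega>. m i (X i \<omega>) \<omega> - h i (X i \<omega>))"
  define clip where "clip = (\<lambda>u::real. max (- c) (min c u))"
  have m_bnd: "0 \<le> m i x \<omega> \<and> m i x \<omega> \<le> c" for i x \<omega> using c by (auto simp: m_def)
  have m_meas[measurable]: "case_prod (m i) \<in> borel_measurable (borel \<Otimes>\<^sub>M P)" if "1 \<le> i" for i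
  proof -
    have [measurable]: "eps i \<in> borel_measurable P" "eta i \<in> borel_measurable P" using me mt that by auto
    show ?thesis unfolding m_def by measurable
  qed
  have m_int: "integrable P (m i x)" if "1 \<le> i" for i x
    using m_bnd measurable_Pair2[OF m_meas[OF that], of x] by (intro integrable_const_bound[where B=c]) (auto simp: c)
  have h_bnd: "0 \<le> h i x \<and> h i x \<le> c" if "1 \<le> i" for i x
    using m_bnd m_int[OF that] unfolding h_def
    by (auto intro!: integral_nonneg_AE integral_le_const)
  have h_meas[measurable]: "h i \<in> borel_measurable borel" if "1 \<le> i" for i
    unfolding h_def using m_meas[OF that] by (rule borel_measurable_lebesgue_integral)
  have D_bnd: "\<bar>D i \<omega>\<bar> \<le> c" if "1 \<le> i" for i \<omega>
    using m_bnd[of i "X i \<omega>" \<omega>] h_bnd[OF that, of "X i \<omega>"] by (auto simp: D_def)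
  have D_meas: "D i \<in> borel_measurable (filt P eps eta k)" if "1 \<le> i" "i \<le> n" "i \<le> k" for i k
  proof -
    have [measurable]: "eps i \<in> borel_measurable (filt P eps eta k)" "eta i \<in> borel_measurable (filt P eps eta k)"
      using that by (auto intro: eps_filt eta_filt)
    have [measurable]: "X i \<in> borel_measurable (filt P eps eta k)"
      using that by (intro filt_meas_mono[OF Xm]) auto
    have [measurable]: "h i \<in> borel_measurable borel" using that by (intro h_meas)
    show ?thesis unfolding D_def m_def by measurable
  qed
  have D_int: "integrable P (\<lambda>\<omega>. D i \<omega> * D j \<omega>)" if "1 \<le> i" "i \<le> n" "1 \<le> j" "j \<le> n" for i j
  proof (rule integrable_const_bound[where B="c * c"])
    show "AE x in P. norm (D i x * D j x) \<le> c * c"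
      using D_bnd[OF that(1)] D_bnd[OF that(3)] c by (auto simp: abs_mult intro!: mult_mono)
    show "(\<lambda>\<omega>. D i \<omega> * D j \<omega>) \<in> borel_measurable P"
      using D_meas[OF that(1,2) order.refl] D_meas[OF that(3,4) order.refl]
      by (intro borel_measurable_times filt_meas_P) auto
  qed
  have orth: "(\<integral>\<omega>. D i \<omega> * D j \<omega> \<partial>P) = 0" if ij: "1 \<le> i" "i < j" "j \<le> n" for i j
  proof -
    have j1: "1 \<le> j" using ij by auto
    have "(\<lambda>\<omega>. (D i \<omega>, X j \<omega>)) \<in> borel_measurable (filt P eps eta (j - 1))"
      unfolding borel_prod[symmetric] using ij by (intro measurable_Pair D_meas Xm) auto
    note ind = indep_filt[OF j1 this]
    define g where "g = (\<lambda>(y::real\<times>real) (z::real\<times>real). clip (fst y) * (min ((fst z * snd y + snd z)\<^sup>2) c - h j (snd y)))"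
    have [measurable]: "h j \<in> borel_measurable borel" using j1 by (rule h_meas)
    have gm: "case_prod g \<in> borel_measurable (borel \<Otimes>\<^sub>M borel)"
      unfolding g_def clip_def borel_prod[symmetric] case_prod_beta' by measurable
    have gb: "\<bar>g y z\<bar> \<le> c * c" for y z
    proof -
      have "\<bar>clip (fst y)\<bar> \<le> c" using c by (auto simp: clip_def)
      moreover have "\<bar>min ((fst z * snd y + snd z)\<^sup>2) c - h j (snd y)\<bar> \<le> c"
      proof -
        have "0 \<le> min ((fst z * snd y + snd z)\<^sup>2) c" "min ((fst z * snd y + snd z)\<^sup>2) c \<le> c" using c by auto
        then show ?thesis unfolding abs_le_iff using h_bnd[OF j1, of "snd y"] by linarith
      qed
      ultimately show ?thesis unfolding g_def by (auto simp: abs_mult intro!: mult_mono)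
    qed
    have "(\<integral>\<omega>. D i \<omega> * D j \<omega> \<partial>P) = (\<integral>\<omega>. g (D i \<omega>, X j \<omega>) (eps j \<omega>, eta j \<omega>) \<partial>P)"
    proof (rule Bochner_Integration.integral_cong[OF refl])
      fix \<omega> have "clip (D i \<omega>) = D i \<omega>" using D_bnd[OF ij(1), of \<omega>] by (auto simp: clip_def)
      then show "D i \<omega> * D j \<omega> = g (D i \<omega>, X j \<omega>) (eps j \<omega>, eta j \<omega>)"
        by (simp add: g_def D_def m_def)
    qed
    also have "\<dots> = (\<integral>\<omega>. (\<integral>\<omega>'. g (D i \<omega>, X j \<omega>) (eps j \<omega>', eta j \<omega>') \<partial>P) \<partial>P)"
      by (rule indep_integral_split[OF ind gm gb])
    also have "\<dots> = (\<integral>\<omega>. 0 \<partial>P)"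
    proof (rule Bochner_Integration.integral_cong[OF refl])
      fix \<omega>
      have "(\<integral>\<omega>'. m j (X j \<omega>) \<omega>' - h j (X j \<omega>) \<partial>P) = 0"
        using m_int[OF j1] by (simp add: Bochner_Integration.integral_diff prob_space h_def)
      then show "(\<integral>\<omega>'. g (D i \<omega>, X j \<omega>) (eps j \<omega>', eta j \<omega>') \<partial>P) = 0"
        by (simp add: g_def m_def)
    qed
    finally show ?thesis by simp
  qed
  have sq: "(\<integral>\<omega>. D j \<omega> * D j \<omega> \<partial>P) \<le> c powr (1 - a) * K" if j: "1 \<le> j" "j \<le> n" for j
  proof -
    have "(\<lambda>\<omega>. (X j \<omega>, X j \<omega>)) \<in> borel_measurable (filt P eps eta (j - 1))"
      unfolding borel_prod[symmetric] using j by (intro measurable_Pair Xm) auto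
    note ind = indep_filt[OF j(1) this]
    define g where "g = (\<lambda>(y::real\<times>real) (z::real\<times>real). (min ((fst z * snd y + snd z)\<^sup>2) c - h j (snd y))\<^sup>2)"
    have [measurable]: "h j \<in> borel_measurable borel" using j by (intro h_meas)
    have gm: "case_prod g \<in> borel_measurable (borel \<Otimes>\<^sub>M borel)"
      unfolding g_def borel_prod[symmetric] case_prod_beta' by measurable
    have gb: "\<bar>g y z\<bar> \<le> c * c" for y z
    proof -
      have "0 \<le> min ((fst z * snd y + snd z)\<^sup>2) c" "min ((fst z * snd y + snd z)\<^sup>2) c \<le> c" using c by auto
      then have "\<bar>min ((fst z * snd y + snd z)\<^sup>2) c - h j (snd y)\<bar> \<le> c"
        unfolding abs_le_iff using h_bnd[OF j(1), of "snd y"] by linarith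
      then have "\<bar>min ((fst z * snd y + snd z)\<^sup>2) c - h j (snd y)\<bar> * \<bar>min ((fst z * snd y + snd z)\<^sup>2) c - h j (snd y)\<bar> \<le> c * c"
        by (intro mult_mono) auto
      then show ?thesis unfolding g_def by (simp add: power2_eq_square abs_mult)
    qed
    have "(\<integral>\<omega>. D j \<omega> * D j \<omega> \<partial>P) = (\<integral>\<omega>. g (X j \<omega>, X j \<omega>) (eps j \<omega>, eta j \<omega>) \<partial>P)"
      by (rule Bochner_Integration.integral_cong[OF refl]) (simp add: g_def D_def m_def power2_eq_square)
    also have "\<dots> = (\<integral>\<omega>. (\<integral>\<omega>'. g (X j \<omega>, X j \<omega>) (eps j \<omega>', eta j \<omega>') \<partial>P) \<partial>P)"
      by (rule indep_integral_split[OF ind gm gb])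
    also have "\<dots> \<le> c powr (1 - a) * K"
    proof (cases "integrable P (\<lambda>\<omega>. (\<integral>\<omega>'. g (X j \<omega>, X j \<omega>) (eps j \<omega>', eta j \<omega>') \<partial>P))")
      case False
      then show ?thesis using K c by (simp add: not_integrable_integral_eq)
    next
      case True
      show ?thesis
      proof (rule integral_le_const[OF True], rule AE_I2)
        fix \<omega> assume \<omega>: "\<omega> \<in> space P"
        define x where "x = X j \<omega>"
        have x: "zl \<le> x" "x \<le> zu" using Xb[OF j \<omega>] by (auto simp: x_def)
        have m2m: "(\<lambda>\<omega>'. (m j x \<omega>')\<^sup>2) \<in> borel_measurable P"
          using measurable_Pair2[OF m_meas[OF j(1)], of x] by simp
        have m2: "integrable P (\<lambda>\<omega>'. (m j x \<omega>')\<^sup>2)"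
          using m_bnd c m2m by (intro integrable_const_bound[where B="c * c"])
             (auto simp: power2_eq_square abs_mult intro!: mult_mono)
        have "(\<integral>\<omega>'. g (x, x) (eps j \<omega>', eta j \<omega>') \<partial>P) = (\<integral>\<omega>'. (m j x \<omega>' - h j x)\<^sup>2 \<partial>P)"
          by (simp add: g_def m_def)
        also have "\<dots> = (\<integral>\<omega>'. (m j x \<omega>')\<^sup>2 \<partial>P) - (h j x)\<^sup>2"
          unfolding h_def by (rule variance_eq[OF m_int[OF j(1)] m2])
        also have "\<dots> \<le> (\<integral>\<omega>'. (m j x \<omega>')\<^sup>2 \<partial>P)" by simp
        also have "\<dots> \<le> c powr (1 - a) * K"
          using h_sq[OF j(1) x] by (simp add: m_def)
        finally show "(\<integral>\<omega>'. g (X j \<omega>, X j \<omega>) (eps j \<omega>', eta j \<omega>') \<partial>P) \<le> c powr (1 - a) * K"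
          by (simp add: x_def)
      qed
    qed
    finally show ?thesis .
  qed
  define T where "T = (\<lambda>\<omega>. \<Sum>i=1..n. D i \<omega>)"
  have DP: "D i \<in> borel_measurable P" if "1 \<le> i" "i \<le> n" for i
    using D_meas[OF that order.refl] by (rule filt_meas_P)
  have TP[measurable]: "T \<in> borel_measurable P"
    unfolding T_def using DP by (intro borel_measurable_sum) auto
  have T2: "(T \<omega>)\<^sup>2 = (\<Sum>i=1..n. \<Sum>j=1..n. D i \<omega> * D j \<omega>)" for \<omega>
    unfolding T_def power2_eq_square by (rule sum_product)
  have T2int: "integrable P (\<lambda>\<omega>. (T \<omega>)\<^sup>2)"
    unfolding T2 using D_int by (intro Bochner_Integration.integrable_sum) auto
  have row: "(\<Sum>j=1..n. \<integral>\<omega>. D i \<omega> * D j \<omega> \<partial>P) = (\<integral>\<omega>. D i \<omega> * D i \<omega> \<partial>P)"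
    if i: "i \<in> {1..n}" for i
  proof -
    have "(\<Sum>j=1..n. \<integral>\<omega>. D i \<omega> * D j \<omega> \<partial>P) = (\<integral>\<omega>. D i \<omega> * D i \<omega> \<partial>P) + (\<Sum>j\<in>{1..n} - {i}. \<integral>\<omega>. D i \<omega> * D j \<omega> \<partial>P)"
      using i by (subst sum.remove[of _ i]) auto
    also have "(\<Sum>j\<in>{1..n} - {i}. \<integral>\<omega>. D i \<omega> * D j \<omega> \<partial>P) = 0"
    proof (rule sum.neutral, rule ballI)
      fix j assume j: "j \<in> {1..n} - {i}"
      show "(\<integral>\<omega>. D i \<omega> * D j \<omega> \<partial>P) = 0"
      proof (cases "i < j")
        case True then show ?thesis using i j by (intro orth) auto
      next
        case False
        then have "j < i" using j by auto
        then have "(\<integral>\<omega>. D j \<omega> * D i \<omega> \<partial>P) = 0" using i j by (intro orth) auto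
        then show ?thesis by (simp add: mult.commute)
      qed
    qed
    finally show ?thesis by simp
  qed
  have ET2: "(\<integral>\<omega>. (T \<omega>)\<^sup>2 \<partial>P) \<le> n * (c powr (1 - a) * K)"
  proof -
    have "(\<integral>\<omega>. (T \<omega>)\<^sup>2 \<partial>P) = (\<Sum>i=1..n. \<Sum>j=1..n. \<integral>\<omega>. D i \<omega> * D j \<omega> \<partial>P)"
      unfolding T2 using D_int
      by (subst Bochner_Integration.integral_sum, (auto intro!: Bochner_Integration.integrable_sum)[1])
         (auto intro!: sum.cong Bochner_Integration.integral_sum)
    also have "\<dots> = (\<Sum>i=1..n. \<integral>\<omega>. D i \<omega> * D i \<omega> \<partial>P)"
      by (intro sum.cong refl row)
    also have "\<dots> \<le> (\<Sum>i=1..n. c powr (1 - a) * K)"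
      by (intro sum_mono sq) auto
    also have "\<dots> = n * (c powr (1 - a) * K)" by simp
    finally show ?thesis .
  qed
  have sub: "{\<omega> \<in> space P. (\<Sum>i=1..n. (eps i \<omega> * X i \<omega> + eta i \<omega>)\<^sup>2) \<le> n * mu - c}
      \<subseteq> {\<omega> \<in> space P. tau\<^sup>2 \<le> (T \<omega>)\<^sup>2}"
  proof safe
    fix \<omega> assume \<omega>: "\<omega> \<in> space P" and S: "(\<Sum>i=1..n. (eps i \<omega> * X i \<omega> + eta i \<omega>)\<^sup>2) \<le> n * mu - c"
    have "(\<Sum>i=1..n. m i (X i \<omega>) \<omega>) \<le> (\<Sum>i=1..n. (eps i \<omega> * X i \<omega> + eta i \<omega>)\<^sup>2)"
      by (intro sum_mono) (simp add: m_def)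
    moreover have "(\<Sum>i=1..n. m i (X i \<omega>) \<omega>) = T \<omega> + (\<Sum>i=1..n. h i (X i \<omega>))"
      by (simp add: T_def D_def sum_subtractf)
    moreover have "(\<Sum>i=1..n. mu - K / c powr a) \<le> (\<Sum>i=1..n. h i (X i \<omega>))"
      using Xb \<omega> by (intro sum_mono) (auto simp: h_def m_def intro!: h_low)
    moreover have "(\<Sum>i=1..n. mu - K / c powr a) = n * mu - n * (K / c powr a)"
      by (simp add: algebra_simps)
    ultimately have "T \<omega> \<le> - tau" using S tau(1) by linarith
    then have "tau\<^sup>2 \<le> (- T \<omega>)\<^sup>2" using tau(2) by (intro power_mono) auto
    then show "tau\<^sup>2 \<le> (T \<omega>)\<^sup>2" by simp
  qed
  have "prob {\<omega> \<in> space P. (\<Sum>i=1..n. (eps i \<omega> * X i \<omega> + eta i \<omega>)\<^sup>2) \<le> n * mu - c}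
      \<le> prob {\<omega> \<in> space P. tau\<^sup>2 \<le> (T \<omega>)\<^sup>2}"
    by (rule finite_measure_mono[OF sub]) measurable
  also have "\<dots> \<le> (\<integral>\<omega>. (T \<omega>)\<^sup>2 \<partial>P) / tau\<^sup>2"
    using tau(2) by (intro integral_Markov_inequality_measure[OF T2int, where A="space P"]) auto
  also have "\<dots> \<le> n * (c powr (1 - a) * K) / tau\<^sup>2"
    using ET2 by (intro divide_right_mono) auto
  finally show ?thesis .
qed

end


lemma sq_le_powr:
  fixes e q :: real assumes "q \<ge> 2"
  shows "e\<^sup>2 \<le> 1 + \<bar>e\<bar> powr q" "\<bar>e\<bar> \<le> 2 + \<bar>e\<bar> powr q"
proof -
  show 1: "e\<^sup>2 \<le> 1 + \<bar>e\<bar> powr q"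
  proof (cases "\<bar>e\<bar> \<le> 1")
    case True
    then have "\<bar>e\<bar> * \<bar>e\<bar> \<le> 1" by (intro mult_le_one) auto
    then have "e\<^sup>2 \<le> 1" by (simp add: power2_eq_square abs_mult_self_eq)
    then show ?thesis using powr_ge_zero[of "\<bar>e\<bar>" q] by linarith
  next
    case False
    then have "\<bar>e\<bar> powr 2 \<le> \<bar>e\<bar> powr q" using assms by (intro powr_mono) auto
    moreover have "\<bar>e\<bar> powr 2 = e\<^sup>2" using False by (simp add: powr_numeral)
    ultimately show ?thesis by simp
  qed
  have "0 \<le> (\<bar>e\<bar> - 1)\<^sup>2" by simp
  then have "0 \<le> \<bar>e\<bar> * \<bar>e\<bar> - 2 * \<bar>e\<bar> + 1" by (simp add: power2_eq_square algebra_simps)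
  moreover have "0 \<le> e * e" by simp
  ultimately have "\<bar>e\<bar> \<le> 1 + e\<^sup>2" by (simp add: abs_mult_self_eq power2_eq_square)
  then show "\<bar>e\<bar> \<le> 2 + \<bar>e\<bar> powr q" using 1 by simp
qed

lemma (in prob_space) mom_transfer:
  fixes U V :: "'a \<Rightarrow> real" and q L :: real
  assumes U[measurable]: "U \<in> borel_measurable M" and V[measurable]: "V \<in> borel_measurable M"
    and d: "distr M borel U = distr M borel V"
    and L: "(\<integral>\<^sup>+\<omega>. ennreal (\<bar>V \<omega>\<bar> powr q) \<partial>M) \<le> ennreal L" and q: "q \<ge> 2" and L0: "L \<ge> 0"
  shows "integrable M (\<lambda>\<omega>. \<bar>U \<omega>\<bar> powr q)" "(\<integral>\<omega>. \<bar>U \<omega>\<bar> powr q \<partial>M) \<le> L"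
    "integrable M U" "integrable M (\<lambda>\<omega>. (U \<omega>)\<^sup>2)"
    "(\<integral>\<omega>. (U \<omega>)\<^sup>2 \<partial>M) = (\<integral>\<omega>. (V \<omega>)\<^sup>2 \<partial>M)" "(\<integral>\<omega>. U \<omega> \<partial>M) = (\<integral>\<omega>. V \<omega> \<partial>M)"
proof -
  have eqn: "(\<integral>\<^sup>+\<omega>. ennreal (\<bar>U \<omega>\<bar> powr q) \<partial>M) = (\<integral>\<^sup>+\<omega>. ennreal (\<bar>V \<omega>\<bar> powr q) \<partial>M)"
  proof -
    have "(\<integral>\<^sup>+\<omega>. ennreal (\<bar>U \<omega>\<bar> powr q) \<partial>M) = (\<integral>\<^sup>+x. ennreal (\<bar>x\<bar> powr q) \<partial>distr M borel U)"
      by (subst nn_integral_distr) auto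
    also have "\<dots> = (\<integral>\<^sup>+x. ennreal (\<bar>x\<bar> powr q) \<partial>distr M borel V)" by (simp add: d)
    also have "\<dots> = (\<integral>\<^sup>+\<omega>. ennreal (\<bar>V \<omega>\<bar> powr q) \<partial>M)"
      by (subst nn_integral_distr) auto
    finally show ?thesis .
  qed
  have fin: "(\<integral>\<^sup>+\<omega>. ennreal (\<bar>U \<omega>\<bar> powr q) \<partial>M) < \<infinity>"
    unfolding eqn by (rule le_less_trans[OF L]) simp
  show i1: "integrable M (\<lambda>\<omega>. \<bar>U \<omega>\<bar> powr q)"
    by (rule integrableI_nonneg) (use fin in auto)
  have "(\<integral>\<omega>. \<bar>U \<omega>\<bar> powr q \<partial>M) = enn2real (\<integral>\<^sup>+\<omega>. ennreal (\<bar>U \<omega>\<bar> powr q) \<partial>M)"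
    by (rule integral_eq_nn_integral) auto
  also have "\<dots> \<le> enn2real (ennreal L)"
    unfolding eqn by (rule enn2real_mono[OF L]) simp
  also have "\<dots> \<le> L" using L0 by simp
  finally show "(\<integral>\<omega>. \<bar>U \<omega>\<bar> powr q \<partial>M) \<le> L" .
  have i2: "integrable M (\<lambda>\<omega>. 2 + \<bar>U \<omega>\<bar> powr q)" using i1 by simp
  have sq1: "norm (U \<omega>) \<le> norm (2 + \<bar>U \<omega>\<bar> powr q)" for \<omega>
  proof -
    have a1: "\<bar>U \<omega>\<bar> \<le> 2 + \<bar>U \<omega>\<bar> powr q" by (rule sq_le_powr(2)[OF q])
    have a2: "0 \<le> 2 + \<bar>U \<omega>\<bar> powr q" by (simp add: add_nonneg_nonneg)
    show ?thesis by (simp only: real_norm_def abs_of_nonneg[OF a2] a1)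
  qed
  show "integrable M U"
    by (intro Bochner_Integration.integrable_bound[OF i2] AE_I2 sq1) simp
  have sq2: "e\<^sup>2 \<le> 2 + \<bar>e\<bar> powr q" for e using sq_le_powr(1)[OF q, of e] by linarith
  have sq3: "norm ((U \<omega>)\<^sup>2) \<le> norm (2 + \<bar>U \<omega>\<bar> powr q)" for \<omega>
    using sq2[of "U \<omega>"] by simp
  show "integrable M (\<lambda>\<omega>. (U \<omega>)\<^sup>2)"
    by (intro Bochner_Integration.integrable_bound[OF i2] AE_I2 sq3) simp
  show "(\<integral>\<omega>. (U \<omega>)\<^sup>2 \<partial>M) = (\<integral>\<omega>. (V \<omega>)\<^sup>2 \<partial>M)"
  proof -
    have "(\<integral>\<omega>. (U \<omega>)\<^sup>2 \<partial>M) = integral\<^sup>L (distr M borel U) (\<lambda>x. x\<^sup>2)"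
      by (rule integral_distr[symmetric]) auto
    also have "\<dots> = integral\<^sup>L (distr M borel V) (\<lambda>x. x\<^sup>2)" by (simp only: d)
    also have "\<dots> = (\<integral>\<omega>. (V \<omega>)\<^sup>2 \<partial>M)" by (rule integral_distr) auto
    finally show ?thesis .
  qed
  show "(\<integral>\<omega>. U \<omega> \<partial>M) = (\<integral>\<omega>. V \<omega> \<partial>M)"
  proof -
    have "(\<integral>\<omega>. U \<omega> \<partial>M) = integral\<^sup>L (distr M borel U) (\<lambda>x. x)"
      by (rule integral_distr[symmetric]) auto
    also have "\<dots> = integral\<^sup>L (distr M borel V) (\<lambda>x. x)" by (simp only: d)
    also have "\<dots> = (\<integral>\<omega>. V \<omega> \<partial>M)" by (rule integral_distr) auto
    finally show ?thesis .
  qed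
qed


lemma (in chan) moments:
  fixes a zl zu Le Lt sl nl c x :: real and i :: nat
  assumes a: "0 < a" "a \<le> 1" and zl: "0 \<le> zl" and x: "zl \<le> x" "x \<le> zu" and c: "c > 0" and i: "1 \<le> i"
    and ide: "distr P borel (eps i) = distr P borel (eps 1)"
    and idt: "distr P borel (eta i) = distr P borel (eta 1)"
    and Le: "(\<integral>\<^sup>+\<omega>. ennreal (\<bar>eps 1 \<omega>\<bar> powr (2 + 2 * a)) \<partial>P) \<le> ennreal Le" "Le \<ge> 0"
    and Lt: "(\<integral>\<^sup>+\<omega>. ennreal (\<bar>eta 1 \<omega>\<bar> powr (2 + 2 * a)) \<partial>P) \<le> ennreal Lt" "Lt \<ge> 0"
    and sl: "sl \<le> (\<integral>\<omega>. (eps 1 \<omega>)\<^sup>2 \<partial>P)" and nl: "nl \<le> (\<integral>\<omega>. (eta 1 \<omega>)\<^sup>2 \<partial>P)"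
    and mean: "(\<integral>\<omega>. eta 1 \<omega> \<partial>P) = 0"
  shows "sl * zl\<^sup>2 + nl - (2 powr (1 + 2 * a) * (zu powr (2 + 2 * a) * Le + Lt)) / c powr a
           \<le> (\<integral>\<omega>. min ((eps i \<omega> * x + eta i \<omega>)\<^sup>2) c \<partial>P)"
    and "(\<integral>\<omega>. (min ((eps i \<omega> * x + eta i \<omega>)\<^sup>2) c)\<^sup>2 \<partial>P)
           \<le> c powr (1 - a) * (2 powr (1 + 2 * a) * (zu powr (2 + 2 * a) * Le + Lt))"
proof -
  define K where "K = 2 powr (1 + 2 * a) * (zu powr (2 + 2 * a) * Le + Lt)"
  define q where "q = 2 + 2 * a"
  have q: "q \<ge> 2" using a by (simp add: q_def)
  have x0: "0 \<le> x" using zl x by simp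
  have [measurable]: "eps i \<in> borel_measurable P" "eta i \<in> borel_measurable P"
    "eps 1 \<in> borel_measurable P" "eta 1 \<in> borel_measurable P"
    using me[OF i] mt[OF i] me[OF order.refl] mt[OF order.refl] by auto
  note EM = mom_transfer[OF me[OF i] me[OF order.refl] ide Le(1)[folded q_def] q Le(2)]
  note TM = mom_transfer[OF mt[OF i] mt[OF order.refl] idt Lt(1)[folded q_def] q Lt(2)]
  have "indep_var borel ((\<lambda>f. f i) \<circ> (\<lambda>\<omega>. \<lambda>k\<in>{1..}. eps k \<omega>)) borel ((\<lambda>f. f i) \<circ> (\<lambda>\<omega>. \<lambda>k\<in>{1..}. eta k \<omega>))"
    using i by (intro indep_var_compose[OF iet] measurable_component_singleton) auto
  moreover have "((\<lambda>f. f i) \<circ> (\<lambda>\<omega>. \<lambda>k\<in>{1..}. eps k \<omega>)) = eps i"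
    "((\<lambda>f. f i) \<circ> (\<lambda>\<omega>. \<lambda>k\<in>{1..}. eta k \<omega>)) = eta i" using i by (auto simp: fun_eq_iff)
  ultimately have ind: "indep_var borel (eps i) borel (eta i)" by simp
  have cross_int: "integrable P (\<lambda>\<omega>. eps i \<omega> * eta i \<omega>)"
    by (rule indep_var_integrable[OF ind EM(3) TM(3)])
  have cross: "(\<integral>\<omega>. eps i \<omega> * eta i \<omega> \<partial>P) = 0"
    using indep_var_lebesgue_integral[OF ind EM(3) TM(3)] TM(6) mean by simp
  define w where "w = (\<lambda>\<omega>. eps i \<omega> * x + eta i \<omega>)"
  have wsq: "(w \<omega>)\<^sup>2 = x\<^sup>2 * (eps i \<omega>)\<^sup>2 + 2 * x * (eps i \<omega> * eta i \<omega>) + (eta i \<omega>)\<^sup>2" for \<omega>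
    by (simp add: w_def power2_eq_square algebra_simps)
  have w2_int: "integrable P (\<lambda>\<omega>. (w \<omega>)\<^sup>2)"
    unfolding wsq using EM(4) TM(4) cross_int by auto
  have w2: "(\<integral>\<omega>. (w \<omega>)\<^sup>2 \<partial>P) = x\<^sup>2 * (\<integral>\<omega>. (eps i \<omega>)\<^sup>2 \<partial>P) + (\<integral>\<omega>. (eta i \<omega>)\<^sup>2 \<partial>P)"
    unfolding wsq using EM(4) TM(4) cross_int cross by (simp add: Bochner_Integration.integral_add)
  have e2: "sl * zl\<^sup>2 \<le> x\<^sup>2 * (\<integral>\<omega>. (eps i \<omega>)\<^sup>2 \<partial>P)"
  proof -
    have "0 \<le> (\<integral>\<omega>. (eps i \<omega>)\<^sup>2 \<partial>P)" by simp
    moreover have "zl\<^sup>2 \<le> x\<^sup>2" using zl x by (intro power_mono) auto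
    ultimately have "zl\<^sup>2 * (\<integral>\<omega>. (eps i \<omega>)\<^sup>2 \<partial>P) \<le> x\<^sup>2 * (\<integral>\<omega>. (eps i \<omega>)\<^sup>2 \<partial>P)"
      by (intro mult_right_mono) auto
    moreover have "zl\<^sup>2 * sl \<le> zl\<^sup>2 * (\<integral>\<omega>. (eps i \<omega>)\<^sup>2 \<partial>P)"
      using sl EM(5) by (intro mult_left_mono) auto
    ultimately show ?thesis by (simp add: mult.commute)
  qed
  have w2_low: "sl * zl\<^sup>2 + nl \<le> (\<integral>\<omega>. (w \<omega>)\<^sup>2 \<partial>P)"
    using w2 e2 nl TM(5) by simp
  have wq_bnd: "\<bar>w \<omega>\<bar> powr q \<le> 2 powr (q - 1) * (x powr q * \<bar>eps i \<omega>\<bar> powr q + \<bar>eta i \<omega>\<bar> powr q)" for \<omega>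
    unfolding w_def using x0 q by (intro powr_lin_le) auto
  have rhs_int: "integrable P (\<lambda>\<omega>. 2 powr (q - 1) * (x powr q * \<bar>eps i \<omega>\<bar> powr q + \<bar>eta i \<omega>\<bar> powr q))"
    using EM(1) TM(1) by auto
  have wq_int: "integrable P (\<lambda>\<omega>. \<bar>w \<omega>\<bar> powr q)"
  proof (rule Bochner_Integration.integrable_bound[OF rhs_int])
    show "(\<lambda>\<omega>. \<bar>w \<omega>\<bar> powr q) \<in> borel_measurable P" unfolding w_def by measurable
    show "AE \<omega> in P. norm (\<bar>w \<omega>\<bar> powr q) \<le> norm (2 powr (q - 1) * (x powr q * \<bar>eps i \<omega>\<bar> powr q + \<bar>eta i \<omega>\<bar> powr q))"
    proof (rule AE_I2)
      fix \<omega>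
      have "0 \<le> 2 powr (q - 1) * (x powr q * \<bar>eps i \<omega>\<bar> powr q + \<bar>eta i \<omega>\<bar> powr q)" by simp
      then show "norm (\<bar>w \<omega>\<bar> powr q) \<le> norm (2 powr (q - 1) * (x powr q * \<bar>eps i \<omega>\<bar> powr q + \<bar>eta i \<omega>\<bar> powr q))"
        using wq_bnd[of \<omega>] by simp
    qed
  qed
  have wq: "(\<integral>\<omega>. \<bar>w \<omega>\<bar> powr q \<partial>P) \<le> K"
  proof -
    have "(\<integral>\<omega>. \<bar>w \<omega>\<bar> powr q \<partial>P) \<le> (\<integral>\<omega>. 2 powr (q - 1) * (x powr q * \<bar>eps i \<omega>\<bar> powr q + \<bar>eta i \<omega>\<bar> powr q) \<partial>P)"
      by (intro integral_mono wq_int rhs_int wq_bnd)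
    also have "\<dots> = 2 powr (q - 1) * (x powr q * (\<integral>\<omega>. \<bar>eps i \<omega>\<bar> powr q \<partial>P) + (\<integral>\<omega>. \<bar>eta i \<omega>\<bar> powr q \<partial>P))"
      using EM(1) TM(1) by (simp add: Bochner_Integration.integral_add)
    also have "\<dots> \<le> 2 powr (q - 1) * (zu powr q * Le + Lt)"
    proof (intro mult_left_mono add_mono)
      have "x powr q \<le> zu powr q" using x0 x q by (intro powr_mono2) auto
      then show "x powr q * (\<integral>\<omega>. \<bar>eps i \<omega>\<bar> powr q \<partial>P) \<le> zu powr q * Le"
        using EM(2) by (intro mult_mono) auto
    qed (use TM(2) in auto)
    also have "\<dots> = K" unfolding K_def q_def by (simp add: algebra_simps)
    finally show ?thesis .
  qed
  have m_int: "integrable P (\<lambda>\<omega>. min ((w \<omega>)\<^sup>2) c)"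
    by (rule integrable_const_bound[where B=c]) (use c in \<open>auto simp: w_def\<close>)
  have m2_int: "integrable P (\<lambda>\<omega>. (min ((w \<omega>)\<^sup>2) c)\<^sup>2)"
  proof (rule integrable_const_bound[where B="c * c"])
    show "AE \<omega> in P. norm ((min ((w \<omega>)\<^sup>2) c)\<^sup>2) \<le> c * c"
    proof (rule AE_I2)
      fix \<omega>
      have "0 \<le> min ((w \<omega>)\<^sup>2) c" "min ((w \<omega>)\<^sup>2) c \<le> c" using c by auto
      then have "min ((w \<omega>)\<^sup>2) c * min ((w \<omega>)\<^sup>2) c \<le> c * c" by (intro mult_mono) auto
      then show "norm ((min ((w \<omega>)\<^sup>2) c)\<^sup>2) \<le> c * c" by (simp add: power2_eq_square)
    qed
  qed (simp add: w_def)
  have pw: "((w \<omega>)\<^sup>2) powr (1 + a) = \<bar>w \<omega>\<bar> powr q" for \<omega>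
    unfolding q_def by (rule sq_powr)
  have "sl * zl\<^sup>2 + nl - K / c powr a \<le> (\<integral>\<omega>. (w \<omega>)\<^sup>2 \<partial>P) - (\<integral>\<omega>. \<bar>w \<omega>\<bar> powr q \<partial>P) / c powr a"
    using w2_low wq c by (smt (verit) divide_right_mono powr_gt_zero)
  also have "\<dots> = (\<integral>\<omega>. (w \<omega>)\<^sup>2 - \<bar>w \<omega>\<bar> powr q / c powr a \<partial>P)"
    using w2_int wq_int by (simp add: Bochner_Integration.integral_diff)
  also have "\<dots> \<le> (\<integral>\<omega>. min ((w \<omega>)\<^sup>2) c \<partial>P)"
  proof (rule integral_mono)
    show "integrable P (\<lambda>\<omega>. (w \<omega>)\<^sup>2 - \<bar>w \<omega>\<bar> powr q / c powr a)" using w2_int wq_int by auto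
    show "integrable P (\<lambda>\<omega>. min ((w \<omega>)\<^sup>2) c)" by (rule m_int)
    fix \<omega> show "(w \<omega>)\<^sup>2 - \<bar>w \<omega>\<bar> powr q / c powr a \<le> min ((w \<omega>)\<^sup>2) c"
      using trunc_lower[of "(w \<omega>)\<^sup>2" c a] c a pw[of \<omega>] by simp
  qed
  finally show "sl * zl\<^sup>2 + nl - (2 powr (1 + 2 * a) * (zu powr (2 + 2 * a) * Le + Lt)) / c powr a
           \<le> (\<integral>\<omega>. min ((eps i \<omega> * x + eta i \<omega>)\<^sup>2) c \<partial>P)" by (simp add: K_def w_def)
  have "(\<integral>\<omega>. (min ((w \<omega>)\<^sup>2) c)\<^sup>2 \<partial>P) \<le> (\<integral>\<omega>. c powr (1 - a) * \<bar>w \<omega>\<bar> powr q \<partial>P)"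
  proof (rule integral_mono[OF m2_int])
    show "integrable P (\<lambda>\<omega>. c powr (1 - a) * \<bar>w \<omega>\<bar> powr q)" using wq_int by auto
    fix \<omega> show "(min ((w \<omega>)\<^sup>2) c)\<^sup>2 \<le> c powr (1 - a) * \<bar>w \<omega>\<bar> powr q"
      using trunc_sq[of "(w \<omega>)\<^sup>2" c a] c a pw[of \<omega>] by simp
  qed
  also have "\<dots> = c powr (1 - a) * (\<integral>\<omega>. \<bar>w \<omega>\<bar> powr q \<partial>P)" by simp
  also have "\<dots> \<le> c powr (1 - a) * K" using wq by (intro mult_left_mono) auto
  finally show "(\<integral>\<omega>. (min ((eps i \<omega> * x + eta i \<omega>)\<^sup>2) c)\<^sup>2 \<partial>P)
           \<le> c powr (1 - a) * (2 powr (1 + 2 * a) * (zu powr (2 + 2 * a) * Le + Lt))" by (simp add: K_def w_def)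
qed



theorem theorem4p1:
  fixes M :: "'a measure" and Ps :: "'a measure set"
    and eps eta :: "nat \<Rightarrow> 'a \<Rightarrow> real"
    and \<alpha> \<sigma>u \<sigma>l \<nu>u \<nu>l \<zeta>l \<zeta>u p :: real and n :: nat
  assumes probs: "\<And>P. P \<in> Ps \<Longrightarrow> prob_space P \<and> sets P = sets M"
    and meas_eps: "\<And>i. i \<ge> 1 \<Longrightarrow> eps i \<in> borel_measurable M"
    and meas_eta: "\<And>i. i \<ge> 1 \<Longrightarrow> eta i \<in> borel_measurable M"
    and iid_eps: "\<And>P. P \<in> Ps \<Longrightarrow> prob_space.indep_vars P (\<lambda>_. borel) eps {1..}
                     \<and> (\<forall>i\<ge>1. distr P borel (eps i) = distr P borel (eps 1))"
    and iid_eta: "\<And>P. P \<in> Ps \<Longrightarrow> prob_space.indep_vars P (\<lambda>_. borel) eta {1..}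
                     \<and> (\<forall>i\<ge>1. distr P borel (eta i) = distr P borel (eta 1))"
    and indep: "\<And>P. P \<in> Ps \<Longrightarrow> prob_space.indep_var P
                   (PiM {1..} (\<lambda>_. borel)) (\<lambda>\<omega>. \<lambda>i\<in>{1..}. eps i \<omega>)
                   (PiM {1..} (\<lambda>_. borel)) (\<lambda>\<omega>. \<lambda>i\<in>{1..}. eta i \<omega>)"
    and alpha: "0 < \<alpha>" "\<alpha> \<le> 1"
    and eps2u: "upexp Ps (\<lambda>x. (eps 1 x)\<^sup>2) = ereal (\<sigma>u\<^sup>2)"
    and eps2l: "- upexp Ps (\<lambda>x. - (eps 1 x)\<^sup>2) = ereal (\<sigma>l\<^sup>2)" "\<sigma>l\<^sup>2 > 0"
    and epsmom: "upexp_nn Ps (\<lambda>x. \<bar>eps 1 x\<bar> powr (2 + 2 * \<alpha>)) < \<infinity>"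
    and eta1: "upexp Ps (\<lambda>x. eta 1 x) = 0" "upexp Ps (\<lambda>x. - eta 1 x) = 0"
    and eta2u: "upexp Ps (\<lambda>x. (eta 1 x)\<^sup>2) = ereal (\<nu>u\<^sup>2)"
    and eta2l: "- upexp Ps (\<lambda>x. - (eta 1 x)\<^sup>2) = ereal (\<nu>l\<^sup>2)" "\<nu>l\<^sup>2 > 0"
    and etamom: "upexp_nn Ps (\<lambda>x. \<bar>eta 1 x\<bar> powr (2 + 2 * \<alpha>)) < \<infinity>"
    and zeta: "0 < \<zeta>l" "\<zeta>l < \<zeta>u"
    and p: "p > 0"
    and n: "n \<ge> 1"
  shows "let C = (32 * \<zeta>u powr (2 + 2 * \<alpha>)
                     * enn2real (upexp_nn Ps (\<lambda>x. \<bar>eps 1 x\<bar> powr (2 + 2 * \<alpha>)))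
                   + 32 * enn2real (upexp_nn Ps (\<lambda>x. \<bar>eta 1 x\<bar> powr (2 + 2 * \<alpha>))))
                  powr (1 / (1 + \<alpha>));
             \<gamma> = \<sigma>l\<^sup>2 * \<zeta>l\<^sup>2 + \<nu>l\<^sup>2 - C / (p * real n powr (\<alpha> / (1 + \<alpha>)))
         in \<forall>P\<in>Ps. \<forall>X\<in>Sigma_adm M eps eta n \<zeta>l \<zeta>u.
              measure P {\<omega>\<in>space P. (\<Sum>i=1..n. (eps i \<omega> * X i \<omega> + eta i \<omega>)\<^sup>2) \<le> real n * \<gamma>} \<le> p"
proof -
  define q where "q = 2 + 2 * \<alpha>"
  define Le where "Le = enn2real (upexp_nn Ps (\<lambda>x. \<bar>eps 1 x\<bar> powr (2 + 2 * \<alpha>)))"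
  define Lt where "Lt = enn2real (upexp_nn Ps (\<lambda>x. \<bar>eta 1 x\<bar> powr (2 + 2 * \<alpha>)))"
  define C where "C = (32 * \<zeta>u powr (2 + 2 * \<alpha>) * Le + 32 * Lt) powr (1 / (1 + \<alpha>))"
  define \<gamma> where "\<gamma> = \<sigma>l\<^sup>2 * \<zeta>l\<^sup>2 + \<nu>l\<^sup>2 - C / (p * real n powr (\<alpha> / (1 + \<alpha>)))"
  have goal: "measure P {\<omega>\<in>space P. (\<Sum>i=1..n. (eps i \<omega> * X i \<omega> + eta i \<omega>)\<^sup>2) \<le> real n * \<gamma>} \<le> p"
    if P: "P \<in> Ps" and X: "X \<in> Sigma_adm M eps eta n \<zeta>l \<zeta>u" for P X
  proof -
    have PS: "prob_space P" and sPM: "sets P = sets M" using probs[OF P] by auto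
    have sp: "space P = space M" using sPM by (rule sets_eq_imp_space_eq)
    have meP: "eps i \<in> borel_measurable P" "eta i \<in> borel_measurable P" if "i \<ge> 1" for i
      using meas_eps[OF that] meas_eta[OF that] measurable_cong_sets[OF sPM refl, of borel] by auto
    have ch: "chan P eps eta"
      unfolding chan_def chan_axioms_def
      using PS meP conjunct1[OF iid_eps[OF P]] conjunct1[OF iid_eta[OF P]] indep[OF P] by blast
    interpret chan P eps eta by (rule ch)
    have filtPM: "filt M eps eta k = filt P eps eta k" for k by (simp add: filt_def sp)
    have Xm: "X i \<in> borel_measurable (filt P eps eta (i - 1))" if "1 \<le> i" "i \<le> n" for i
      using X that by (auto simp: Sigma_adm_def filtPM)
    have Xb: "\<zeta>l \<le> X i \<omega> \<and> X i \<omega> \<le> \<zeta>u" if "1 \<le> i" "i \<le> n" "\<omega> \<in> space P" for i \<omega>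
      using X that by (auto simp: Sigma_adm_def sp)
    have LeP: "(\<integral>\<^sup>+\<omega>. ennreal (\<bar>eps 1 \<omega>\<bar> powr (2 + 2 * \<alpha>)) \<partial>P) \<le> ennreal Le"
    proof -
      have "(\<integral>\<^sup>+\<omega>. ennreal (\<bar>eps 1 \<omega>\<bar> powr (2 + 2 * \<alpha>)) \<partial>P) \<le> upexp_nn Ps (\<lambda>x. \<bar>eps 1 x\<bar> powr (2 + 2 * \<alpha>))"
        unfolding upexp_nn_def by (rule SUP_upper[OF P])
      also have "\<dots> = ennreal Le" unfolding Le_def using epsmom by simp
      finally show ?thesis .
    qed
    have LtP: "(\<integral>\<^sup>+\<omega>. ennreal (\<bar>eta 1 \<omega>\<bar> powr (2 + 2 * \<alpha>)) \<partial>P) \<le> ennreal Lt"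
    proof -
      have "(\<integral>\<^sup>+\<omega>. ennreal (\<bar>eta 1 \<omega>\<bar> powr (2 + 2 * \<alpha>)) \<partial>P) \<le> upexp_nn Ps (\<lambda>x. \<bar>eta 1 x\<bar> powr (2 + 2 * \<alpha>))"
        unfolding upexp_nn_def by (rule SUP_upper[OF P])
      also have "\<dots> = ennreal Lt" unfolding Lt_def using etamom by simp
      finally show ?thesis .
    qed
    have Le0: "Le \<ge> 0" and Lt0: "Lt \<ge> 0" by (simp_all add: Le_def Lt_def)
    have sl: "\<sigma>l\<^sup>2 \<le> (\<integral>\<omega>. (eps 1 \<omega>)\<^sup>2 \<partial>P)"
    proof -
      have "ereal (\<integral>\<omega>. - (eps 1 \<omega>)\<^sup>2 \<partial>P) \<le> upexp Ps (\<lambda>x. - (eps 1 x)\<^sup>2)"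
        unfolding upexp_def by (rule SUP_upper[OF P])
      also have "\<dots> = - ereal (\<sigma>l\<^sup>2)" using eps2l(1) by (simp add: ereal_uminus_eq_reorder)
      finally show ?thesis by simp
    qed
    have nl: "\<nu>l\<^sup>2 \<le> (\<integral>\<omega>. (eta 1 \<omega>)\<^sup>2 \<partial>P)"
    proof -
      have "ereal (\<integral>\<omega>. - (eta 1 \<omega>)\<^sup>2 \<partial>P) \<le> upexp Ps (\<lambda>x. - (eta 1 x)\<^sup>2)"
        unfolding upexp_def by (rule SUP_upper[OF P])
      also have "\<dots> = - ereal (\<nu>l\<^sup>2)" using eta2l(1) by (simp add: ereal_uminus_eq_reorder)
      finally show ?thesis by simp
    qed
    have mean: "(\<integral>\<omega>. eta 1 \<omega> \<partial>P) = 0"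
    proof -
      have "ereal (\<integral>\<omega>. eta 1 \<omega> \<partial>P) \<le> upexp Ps (\<lambda>x. eta 1 x)"
        unfolding upexp_def by (rule SUP_upper[OF P])
      moreover have "ereal (\<integral>\<omega>. - eta 1 \<omega> \<partial>P) \<le> upexp Ps (\<lambda>x. - eta 1 x)"
        unfolding upexp_def by (rule SUP_upper[OF P])
      ultimately show ?thesis using eta1 by simp
    qed
    have Lt_pos: "Lt > 0"
    proof (rule ccontr)
      assume "\<not> Lt > 0"
      then have Lt_0: "Lt = 0" using Lt0 by simp
      have q2: "2 + 2 * \<alpha> \<ge> 2" using alpha by simp
      note TM = mom_transfer[OF meP(2)[OF order.refl] meP(2)[OF order.refl] refl LtP q2 Lt0]
      have "(\<integral>\<omega>. \<bar>eta 1 \<omega>\<bar> powr (2 + 2 * \<alpha>) \<partial>P) = 0"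
        using TM(2) Lt_0 by (simp add: antisym integral_nonneg_AE)
      then have "AE \<omega> in P. \<bar>eta 1 \<omega>\<bar> powr (2 + 2 * \<alpha>) = 0"
        using integral_nonneg_eq_0_iff_AE[OF TM(1)] by simp
      then have "AE \<omega> in P. (eta 1 \<omega>)\<^sup>2 = 0" by (auto elim: AE_mp)
      then have "(\<integral>\<omega>. (eta 1 \<omega>)\<^sup>2 \<partial>P) = 0" by (rule integral_eq_zero_AE)
      then show False using nl eta2l(2) by simp
    qed
    show ?thesis
    proof (cases "p \<ge> 1")
      case True
      then show ?thesis using prob_le_1 by (meson order.trans)
    next
      case False
      then have p1: "p < 1" by simp
      define L where "L = \<zeta>u powr (2 + 2 * \<alpha>) * Le + Lt"
      define K where "K = 2 powr (1 + 2 * \<alpha>) * L"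
      define c where "c = real n powr (1 / (1 + \<alpha>)) * C / p"
      have L0: "L > 0" unfolding L_def using Lt_pos Le0 by (simp add: add_nonneg_pos)
      have CL: "C = (32 * L) powr (1 / (1 + \<alpha>))" unfolding C_def L_def by (simp add: algebra_simps)
      note FA = final_arith[OF alpha p p1 n L0 CL K_def c_def]
      have ng: "real n * \<gamma> = real n * (\<sigma>l\<^sup>2 * \<zeta>l\<^sup>2 + \<nu>l\<^sup>2) - c"
        unfolding \<gamma>_def using FA(4) by (simp add: right_diff_distrib)
      have ide: "distr P borel (eps i) = distr P borel (eps 1)" if "1 \<le> i" for i
        by (rule conjunct2[OF iid_eps[OF P], rule_format, OF that])
      have idt: "distr P borel (eta i) = distr P borel (eta 1)" if "1 \<le> i" for i
        by (rule conjunct2[OF iid_eta[OF P], rule_format, OF that])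
      have zl0: "0 \<le> \<zeta>l" using zeta by simp
      have "measure P {\<omega>\<in>space P. (\<Sum>i=1..n. (eps i \<omega> * X i \<omega> + eta i \<omega>)\<^sup>2) \<le> real n * (\<sigma>l\<^sup>2 * \<zeta>l\<^sup>2 + \<nu>l\<^sup>2) - c}
          \<le> n * (c powr (1 - \<alpha>) * K) / (c - n * (K / c powr \<alpha>))\<^sup>2"
      proof (rule main_bound[OF Xm Xb _ _ FA(1) _ refl FA(2)])
        fix i :: nat and x :: real assume i: "1 \<le> i" and x: "\<zeta>l \<le> x" "x \<le> \<zeta>u"
        show "\<sigma>l\<^sup>2 * \<zeta>l\<^sup>2 + \<nu>l\<^sup>2 - K / c powr \<alpha> \<le> (\<integral>\<omega>. min ((eps i \<omega> * x + eta i \<omega>)\<^sup>2) c \<partial>P)"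
          using moments(1)[OF alpha zl0 x FA(1) i ide[OF i] idt[OF i] LeP Le0 LtP Lt0 sl nl mean]
          by (simp add: K_def L_def)
      next
        fix i :: nat and x :: real assume i: "1 \<le> i" and x: "\<zeta>l \<le> x" "x \<le> \<zeta>u"
        show "(\<integral>\<omega>. (min ((eps i \<omega> * x + eta i \<omega>)\<^sup>2) c)\<^sup>2 \<partial>P) \<le> c powr (1 - \<alpha>) * K"
          using moments(2)[OF alpha zl0 x FA(1) i ide[OF i] idt[OF i] LeP Le0 LtP Lt0 sl nl mean]
          by (simp add: K_def L_def)
      next
        show "K \<ge> 0" using L0 by (simp add: K_def)
      qed
      also have "\<dots> \<le> p" by (rule FA(3))
      finally show ?thesis unfolding ng .
    qed
  qed
  show ?thesis unfolding Let_def
    using goal by (simp add: C_def \<gamma>_def Le_def Lt_def)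
qed


end
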